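(* Let $Y$ be a set, $X$ a real vector space, $K$ a compact topological space and $(\Omega,\Sigma,\nu)$ a measure space. Let $\mathcal H$ be a set of functions $\Omega\to X$ with $\alpha\mathcal H=\mathcal H$ for all $\alpha\in\mathbb R$, and let $\mathcal F$ be a set of maps $X\to Y$. Let $S:\mathcal F\times\mathcal H\to\{\text{measurable functions }\Omega\to\mathbb R\}$ and $R:\mathcal H\times K\to\{\text{measurable functions }\Omega\to\mathbb R\}$ satisfy $$|\alpha S(u,f)|=|S(u,\alpha f)|,\qquad |\alpha R(f,k)|=|R(\alpha f,k)|$$ for all $\alpha\in\mathbb R$, $u\in\mathcal F$, $f\in\mathcal H$, $k\in K$. Suppose that for all $1\le r<s<\infty$ there is a constant $C_{s,r}$ with $\|h\|_{L_s(\nu)}\le C_{s,r}\|h\|_{L_r(\nu)}$ for all measurable $h$. Let $1\le p_1\le p_2<\infty$ and $1\le q_1\le q_2<\infty$ with $$\frac1{p_1}-\frac1{p_2}\le \frac1{q_1}-\frac1{q_2}.$$ Then $RS(q_1,p_1)\subseteq RS(q_2,p_2)$.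
   Context: For $g:\Omega\to\mathbb R$, $f\in\mathcal H$ and $w\in\Omega$, $g(w)f\in\mathcal H$ denotes the scalar multiple of the function $f$ by the number $g(w)$, and $S(u,g(w)f)(w)$ denotes the value at the point $w$ of the function $S(u,g(w)f)$ (similarly for $R$). For $1\le q,p<\infty$, a map $u\in\mathcal F$ is called $(q,p)$-$RS$ summing if there is a constant $C>0$ such that $$\Big(\int_\Omega |S(u,g(w)f)(w)|^q\,d\nu(w)\Big)^{1/q}\le C\sup_{k\in K}\Big(\int_\Omega |R(g(w)f,k)(w)|^p\,d\nu(w)\Big)^{1/p}$$ for all $f\in\mathcal H$ and all $g\in\mathcal L_q(\nu)$. $RS(q,p)$ denotes the class of all $(q,p)$-$RS$ summing maps. *)

theory Defs
  imports "HOL-Analysis.Analysis"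
begin

definition lpnorm :: "'w measure \<Rightarrow> real \<Rightarrow> ('w \<Rightarrow> real) \<Rightarrow> ennreal" where
  "lpnorm M p h =
     (let I = (\<integral>\<^sup>+ w. ennreal (\<bar>h w\<bar> powr p) \<partial>M)
      in if I = \<infinity> then \<infinity> else ennreal (enn2real I powr (1 / p)))"

definition RS ::
  "'w measure \<Rightarrow> (('x::real_vector) \<Rightarrow> 'y) set \<Rightarrow> ('w \<Rightarrow> 'x) set \<Rightarrow> 'k set
   \<Rightarrow> (('x \<Rightarrow> 'y) \<Rightarrow> ('w \<Rightarrow> 'x) \<Rightarrow> 'w \<Rightarrow> real)
   \<Rightarrow> (('w \<Rightarrow> 'x) \<Rightarrow> 'k \<Rightarrow> 'w \<Rightarrow> real)
   \<Rightarrow> real \<Rightarrow> real \<Rightarrow> ('x \<Rightarrow> 'y) set" where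
  "RS M F H K S R q p =
    {u \<in> F. \<exists>C>0. \<forall>f\<in>H. \<forall>g. g \<in> borel_measurable M \<and> lpnorm M q g < \<infinity> \<longrightarrow>
        lpnorm M q (\<lambda>w. S u (\<lambda>v. g w *\<^sub>R f v) w)
          \<le> ennreal C * (SUP k\<in>K. lpnorm M p (\<lambda>w. R (\<lambda>v. g w *\<^sub>R f v) k w))}"

end

theory Submission
  imports Defs
begin


definition pI :: "'w measure \<Rightarrow> real \<Rightarrow> ('w \<Rightarrow> real) \<Rightarrow> ennreal" where
  "pI M p h = (\<integral>\<^sup>+ w. ennreal (\<bar>h w\<bar> powr p) \<partial>M)"

lemma lpnorm_pI: "lpnorm M p h = (if pI M p h = \<infinity> then \<infinity> else ennreal (enn2real (pI M p h) powr (1/p)))"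
  by (simp add: lpnorm_def pI_def Let_def)

lemma lpnorm_fin: "pI M p h \<noteq> \<infinity> \<Longrightarrow> lpnorm M p h = ennreal (enn2real (pI M p h) powr (1/p))"
  by (simp add: lpnorm_pI)

lemma lpnorm_fin_iff: "lpnorm M p h < \<infinity> \<longleftrightarrow> pI M p h < \<infinity>"
  by (simp add: lpnorm_pI top.not_eq_extremum)

lemma pI_cong: "(\<And>w. \<bar>h w\<bar> = \<bar>h' w\<bar>) \<Longrightarrow> pI M p h = pI M p h'"
  by (simp add: pI_def)

lemma lpnorm_cong: "(\<And>w. \<bar>h w\<bar> = \<bar>h' w\<bar>) \<Longrightarrow> lpnorm M p h = lpnorm M p h'"
  by (simp add: lpnorm_pI pI_cong[of h h'])

lemma pI_mono: "0 \<le> p \<Longrightarrow> (\<And>w. \<bar>h w\<bar> \<le> \<bar>h' w\<bar>) \<Longrightarrow> pI M p h \<le> pI M p h'"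
  unfolding pI_def by (intro nn_integral_mono ennreal_leI powr_mono2) auto

lemma lp_le:
  assumes p: "0 < p" and c: "0 \<le> c" and le: "pI M p h \<le> ennreal (c powr p)"
  shows "lpnorm M p h \<le> ennreal c"
proof -
  have fin: "pI M p h \<noteq> \<infinity>" using le ennreal_less_top[of "c powr p"]
    by (metis infinity_ennreal_def leD)
  have "enn2real (pI M p h) \<le> c powr p"
    using le fin by (simp add: enn2real_leI)
  hence "enn2real (pI M p h) powr (1/p) \<le> (c powr p) powr (1/p)"
    using p by (intro powr_mono2) auto
  also have "\<dots> = c" using p c by (simp add: powr_powr)
  finally show ?thesis using fin by (simp add: lpnorm_fin ennreal_leI)
qed

lemma lpnorm_mono: "0 < p \<Longrightarrow> (\<And>w. \<bar>h w\<bar> \<le> \<bar>h' w\<bar>) \<Longrightarrow> lpnorm M p h \<le> lpnorm M p h'"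
proof -
  assume p: "0 < p" and le: "\<And>w. \<bar>h w\<bar> \<le> \<bar>h' w\<bar>"
  show ?thesis
  proof (cases "pI M p h' = \<infinity>")
    case True thus ?thesis by (simp add: lpnorm_pI)
  next
    case False
    let ?X = "enn2real (pI M p h')"
    have X: "pI M p h' = ennreal ?X" using False by (simp add: less_top)
    have "pI M p h \<le> ennreal ((?X powr (1/p)) powr p)"
      using pI_mono[of p h h' M] le p X by (simp add: powr_powr)
    hence "lpnorm M p h \<le> ennreal (?X powr (1/p))"
      by (intro lp_le p) auto
    thus ?thesis using False by (simp add: lpnorm_fin)
  qed
qed

lemma lp_scale:
  assumes p: "0 < p" and c: "0 \<le> c" and le: "pI M p h \<le> ennreal (c powr p) * pI M p h'"
  shows "lpnorm M p h \<le> ennreal c * lpnorm M p h'"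
proof (cases "c = 0")
  case True
  hence "pI M p h \<le> ennreal (0 powr p)" using le by simp
  hence "lpnorm M p h \<le> ennreal 0" by (intro lp_le p) auto
  thus ?thesis by simp
next
  case cpos: False
  show ?thesis
  proof (cases "pI M p h' = \<infinity>")
    case True thus ?thesis using cpos c by (simp add: lpnorm_pI ennreal_mult_top)
  next
    case False
    let ?X = "enn2real (pI M p h')"
    have X: "pI M p h' = ennreal ?X" using False by (simp add: less_top)
    have "ennreal (c powr p) * pI M p h' = ennreal ((c * ?X powr (1/p)) powr p)"
      using X c p by (simp add: powr_mult powr_powr ennreal_mult)
    hence "lpnorm M p h \<le> ennreal (c * ?X powr (1/p))"
      using le c by (intro lp_le p) auto
    thus ?thesis using False c by (simp add: lpnorm_fin ennreal_mult)
  qed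
qed



lemma young_pt:
  fixes a b U V \<alpha> \<beta> :: real
  assumes "0 \<le> a" "0 \<le> b" "0 < U" "0 < V" "0 < \<alpha>" "0 < \<beta>" "\<alpha> + \<beta> = 1"
  shows "a powr \<alpha> * b powr \<beta> \<le> U powr \<alpha> * V powr \<beta> * (\<alpha> / U * a + \<beta> / V * b)"
proof (cases "a = 0 \<or> b = 0")
  case True thus ?thesis using assms by auto
next
  case False
  hence ab: "a > 0" "b > 0" using assms by auto
  have "(a/U) powr \<alpha> * (b/V) powr \<beta> \<le> \<alpha> * (a/U) + \<beta> * (b/V)"
    using assms ab by (intro Youngs_inequality_0) auto
  hence "a powr \<alpha> * b powr \<beta> / (U powr \<alpha> * V powr \<beta>) \<le> \<alpha> / U * a + \<beta> / V * b"
    by (simp add: powr_divide)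
  moreover have "U powr \<alpha> * V powr \<beta> > 0" using assms by simp
  ultimately show ?thesis by (simp add: divide_le_eq mult.commute)
qed

lemma holder_nn:
  fixes f1 f2 :: "'w \<Rightarrow> real"
  assumes m: "f1 \<in> borel_measurable M" "f2 \<in> borel_measurable M"
    and nn: "\<And>w. 0 \<le> f1 w" "\<And>w. 0 \<le> f2 w"
    and ab: "0 < \<alpha>" "0 < \<beta>" "\<alpha> + \<beta> = 1"
    and U: "(\<integral>\<^sup>+ w. ennreal (f1 w) \<partial>M) = ennreal U" "0 \<le> U"
    and V: "(\<integral>\<^sup>+ w. ennreal (f2 w) \<partial>M) = ennreal V" "0 \<le> V"
  shows "(\<integral>\<^sup>+ w. ennreal (f1 w powr \<alpha> * f2 w powr \<beta>) \<partial>M) \<le> ennreal (U powr \<alpha> * V powr \<beta>)"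
proof (cases "U = 0 \<or> V = 0")
  case True
  have "AE w in M. f1 w powr \<alpha> * f2 w powr \<beta> = 0"
  proof (cases "U = 0")
    case True
    hence "AE w in M. ennreal (f1 w) = 0" using U m by (simp add: nn_integral_0_iff_AE)
    thus ?thesis by eventually_elim (use nn in auto)
  next
    case False
    hence "V = 0" using True by simp
    hence "AE w in M. ennreal (f2 w) = 0" using V m by (simp add: nn_integral_0_iff_AE)
    thus ?thesis by eventually_elim (use nn in auto)
  qed
  hence "(\<integral>\<^sup>+ w. ennreal (f1 w powr \<alpha> * f2 w powr \<beta>) \<partial>M) = (\<integral>\<^sup>+ w. 0 \<partial>M)"
    by (intro nn_integral_cong_AE) auto
  thus ?thesis by simp
next
  case False
  hence UV: "0 < U" "0 < V" using U V by auto
  define c1 where "c1 = U powr \<alpha> * V powr \<beta> * (\<alpha> / U)"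
  define c2 where "c2 = U powr \<alpha> * V powr \<beta> * (\<beta> / V)"
  have c: "0 \<le> c1" "0 \<le> c2" using UV ab by (auto simp: c1_def c2_def)
  have "(\<integral>\<^sup>+ w. ennreal (f1 w powr \<alpha> * f2 w powr \<beta>) \<partial>M)
      \<le> (\<integral>\<^sup>+ w. ennreal c1 * ennreal (f1 w) + ennreal c2 * ennreal (f2 w) \<partial>M)"
  proof (intro nn_integral_mono)
    fix w
    have "f1 w powr \<alpha> * f2 w powr \<beta> \<le> c1 * f1 w + c2 * f2 w"
      using young_pt[OF nn(1)[of w] nn(2)[of w] UV ab] by (simp add: c1_def c2_def algebra_simps)
    hence "ennreal (f1 w powr \<alpha> * f2 w powr \<beta>) \<le> ennreal (c1 * f1 w + c2 * f2 w)"
      by (rule ennreal_leI)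
    also have "\<dots> = ennreal c1 * ennreal (f1 w) + ennreal c2 * ennreal (f2 w)"
      using c nn by (simp add: ennreal_plus[symmetric] ennreal_mult)
    finally show "ennreal (f1 w powr \<alpha> * f2 w powr \<beta>) \<le> ennreal c1 * ennreal (f1 w) + ennreal c2 * ennreal (f2 w)" .
  qed
  also have "\<dots> = ennreal c1 * ennreal U + ennreal c2 * ennreal V"
    using m by (simp add: nn_integral_add nn_integral_cmult U V)
  also have "\<dots> = ennreal (c1 * U + c2 * V)"
    using c U V by (simp add: ennreal_plus[symmetric] ennreal_mult)
  also have "c1 * U + c2 * V = U powr \<alpha> * V powr \<beta> * (\<alpha> + \<beta>)"
    using UV by (simp add: c1_def c2_def field_simps)
  finally show ?thesis using ab by simp
qed



lemma pI_meas[measurable]: "h \<in> borel_measurable M \<Longrightarrow> (\<lambda>w. ennreal (\<bar>h w\<bar> powr p)) \<in> borel_measurable M"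
  by measurable

lemma pI_zero_mult:
  assumes l: "l \<in> borel_measurable M" and r: "0 < r" and z: "pI M r l = 0" and p: "0 < p"
  shows "lpnorm M p (\<lambda>w. l w * x w) = 0"
proof -
  have "AE w in M. ennreal (\<bar>l w\<bar> powr r) = 0"
    using z l by (simp add: pI_def nn_integral_0_iff_AE)
  hence "AE w in M. ennreal (\<bar>l w * x w\<bar> powr p) = 0"
    by eventually_elim auto
  hence "pI M p (\<lambda>w. l w * x w) = (\<integral>\<^sup>+ w. 0 \<partial>M)"
    unfolding pI_def by (intro nn_integral_cong_AE) auto
  thus ?thesis by (simp add: lpnorm_pI)
qed

lemma pI_indicator:
  assumes "A \<in> sets M" "0 < x"
  shows "pI M x (indicator A) = emeasure M A"
proof -
  have "\<And>w. ennreal (\<bar>indicator A w :: real\<bar> powr x) = indicator A w"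
    using assms by (auto simp: indicator_def)
  thus ?thesis using assms by (simp add: pI_def)
qed

lemma atom_bound:
  assumes rev: "\<And>r s. 1 \<le> r \<Longrightarrow> r < s \<Longrightarrow>
       \<exists>C::real. \<forall>h \<in> borel_measurable M. lpnorm M s h \<le> ennreal C * lpnorm M r h"
  shows "\<exists>\<delta>>0. \<forall>A\<in>sets M. emeasure M A < \<infinity> \<longrightarrow> emeasure M A < ennreal \<delta> \<longrightarrow> emeasure M A = 0"
proof -
  obtain C0 :: real where C0: "\<forall>h \<in> borel_measurable M. lpnorm M 2 h \<le> ennreal C0 * lpnorm M 1 h"
    using rev[of 1 2] by auto
  define \<delta> where "\<delta> = 1 / (1 + C0\<^sup>2)"
  have dpos: "\<delta> > 0" unfolding \<delta>_def by (simp add: add_pos_nonneg)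
  have "emeasure M A = 0" if A: "A \<in> sets M" "emeasure M A < \<infinity>" "emeasure M A < ennreal \<delta>" for A
  proof (rule ccontr)
    assume nz: "emeasure M A \<noteq> 0"
    define m where "m = measure M A"
    have em: "emeasure M A = ennreal m" using A by (simp add: m_def emeasure_eq_ennreal_measure less_top)
    have mpos: "m > 0" using nz em measure_nonneg[of M A] unfolding m_def by (metis ennreal_0 order_le_less)
    have "lpnorm M 2 (indicator A) \<le> ennreal C0 * lpnorm M 1 (indicator A)"
      using C0 A by auto
    also have "lpnorm M 1 (indicator A) = ennreal m"
      using A em mpos by (simp add: lpnorm_fin pI_indicator)
    also have "lpnorm M 2 (indicator A) = ennreal (sqrt m)"
      using A em mpos by (simp add: lpnorm_fin pI_indicator powr_half_sqrt)
    finally have le: "ennreal (sqrt m) \<le> ennreal C0 * ennreal m" .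
    have C0pos: "C0 > 0"
    proof (rule ccontr)
      assume "\<not> C0 > 0"
      hence "ennreal C0 = 0" by (simp add: ennreal_eq_0_iff)
      thus False using le mpos by simp
    qed
    have "sqrt m \<le> C0 * m" using le C0pos mpos by (simp add: ennreal_mult[symmetric])
    hence "(sqrt m)\<^sup>2 \<le> (C0 * m)\<^sup>2" using mpos by (intro power_mono) auto
    hence "m \<le> C0\<^sup>2 * m * m" using mpos by (simp add: power2_eq_square algebra_simps)
    hence "m * 1 \<le> m * (C0\<^sup>2 * m)" by (simp add: algebra_simps)
    hence "1 \<le> C0\<^sup>2 * m" using mpos by (subst (asm) mult_le_cancel_left_pos) auto
    moreover have "C0\<^sup>2 * m \<le> (1 + C0\<^sup>2) * m" using mpos by (intro mult_right_mono) auto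
    ultimately have "1 \<le> (1 + C0\<^sup>2) * m" by linarith
    hence "\<delta> \<le> m" unfolding \<delta>_def by (simp add: divide_le_eq add_pos_nonneg mult.commute)
    thus False using A(3) em by (metis ennreal_leI leD)
  qed
  thus ?thesis using dpos by blast
qed



lemma AE_bound:
  assumes \<delta>: "\<delta> > 0" "\<forall>A\<in>sets M. emeasure M A < \<infinity> \<longrightarrow> emeasure M A < ennreal \<delta> \<longrightarrow> emeasure M A = 0"
    and l: "l \<in> borel_measurable M" and r: "0 < r"
    and L: "pI M r l = ennreal L" "0 < L"
  shows "AE w in M. \<bar>l w\<bar> \<le> (2 * L / \<delta>) powr (1/r)"
proof -
  define t where "t = (2 * L / \<delta>) powr (1/r)"
  have tpos: "t > 0" using \<delta> L by (simp add: t_def)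
  have tr: "t powr r = 2 * L / \<delta>" using \<delta> L r by (simp add: t_def powr_powr)
  define B where "B = {w\<in>space M. t < \<bar>l w\<bar>}"
  have B: "B \<in> sets M" unfolding B_def using l by measurable
  have "(\<integral>\<^sup>+ w. ennreal (t powr r) * indicator B w \<partial>M) \<le> (\<integral>\<^sup>+ w. ennreal (\<bar>l w\<bar> powr r) \<partial>M)"
  proof (intro nn_integral_mono)
    fix w
    show "ennreal (t powr r) * indicator B w \<le> ennreal (\<bar>l w\<bar> powr r)"
    proof (cases "w \<in> B")
      case True
      hence "t powr r \<le> \<bar>l w\<bar> powr r" using tpos r by (intro powr_mono2) (auto simp: B_def)
      thus ?thesis using True by (simp add: ennreal_leI)
    qed simp
  qed
  hence le: "ennreal (t powr r) * emeasure M B \<le> ennreal L"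
    using B L by (simp add: nn_integral_cmult_indicator pI_def)
  have fin: "emeasure M B < \<infinity>"
  proof (rule ccontr)
    assume "\<not> emeasure M B < \<infinity>"
    hence "emeasure M B = \<infinity>" by (metis infinity_ennreal_def top.not_eq_extremum)
    thus False using le tpos by (simp add: ennreal_mult_top top_unique)
  qed
  define b where "b = enn2real (emeasure M B)"
  have eb: "emeasure M B = ennreal b" "0 \<le> b" using fin by (auto simp: b_def less_top)
  have "t powr r * b \<le> L" using le eb L tpos by (simp add: ennreal_mult[symmetric])
  hence "b * (2 * L / \<delta>) \<le> L" using tr by (simp add: mult.commute)
  hence "b * 2 * L \<le> L * \<delta>" using \<delta> by (simp add: field_simps)
  hence "b * 2 \<le> \<delta>" using L by (smt (verit) mult.commute mult_le_cancel_left_pos)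
  hence "b < \<delta>" using \<delta> eb by linarith
  hence "emeasure M B < ennreal \<delta>" using eb by (simp add: ennreal_lessI)
  hence "emeasure M B = 0" using \<delta> B fin by blast
  hence "B \<in> null_sets M" using B by auto
  thus ?thesis by (rule AE_I') (auto simp: B_def t_def)
qed



lemma W:
  assumes rev: "\<And>r s. 1 \<le> r \<Longrightarrow> r < s \<Longrightarrow>
       \<exists>C::real. \<forall>h \<in> borel_measurable M. lpnorm M s h \<le> ennreal C * lpnorm M r h"
  and p1: "1 \<le> p1" and p12: "p1 \<le> p2" and r: "1 \<le> r" and cond: "1/p1 - 1/p2 \<le> 1/r"
  shows "\<exists>D>0. \<forall>l x. l \<in> borel_measurable M \<longrightarrow> x \<in> borel_measurable M \<longrightarrow> pI M r l < \<infinity> \<longrightarrow>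
     lpnorm M p1 (\<lambda>w. l w * x w) \<le> ennreal (D * enn2real (pI M r l) powr (1/r)) * lpnorm M p2 x"
proof (cases "p1 = p2")
  case True
  obtain \<delta> where \<delta>: "\<delta> > 0" "\<forall>A\<in>sets M. emeasure M A < \<infinity> \<longrightarrow> emeasure M A < ennreal \<delta> \<longrightarrow> emeasure M A = 0"
    using atom_bound[OF rev] by blast
  define D where "D = (2 / \<delta>) powr (1/r)"
  have Dpos: "D > 0" using \<delta> by (simp add: D_def)
  have "lpnorm M p1 (\<lambda>w. l w * x w) \<le> ennreal (D * enn2real (pI M r l) powr (1/r)) * lpnorm M p2 x"
    if l: "l \<in> borel_measurable M" and x: "x \<in> borel_measurable M" and fin: "pI M r l < \<infinity>" for l x
  proof -
    define L where "L = enn2real (pI M r l)"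
    have L: "pI M r l = ennreal L" "0 \<le> L" using fin by (auto simp: L_def less_top)
    show ?thesis
    proof (cases "L = 0")
      case True
      hence "lpnorm M p1 (\<lambda>w. l w * x w) = 0" using L l r p1 by (intro pI_zero_mult) auto
      thus ?thesis by simp
    next
      case False
      hence Lpos: "L > 0" using L by simp
      define t where "t = D * L powr (1/r)"
      have t: "0 \<le> t" using Dpos by (simp add: t_def)
      have tt: "t = (2 * L / \<delta>) powr (1/r)" using \<delta> Lpos by (simp add: t_def D_def powr_mult[symmetric])
      have AE: "AE w in M. \<bar>l w\<bar> \<le> t"
        unfolding tt using AE_bound[OF \<delta> l _ L(1) Lpos] r by simp
      have "pI M p1 (\<lambda>w. l w * x w) \<le> (\<integral>\<^sup>+ w. ennreal (t powr p1) * ennreal (\<bar>x w\<bar> powr p1) \<partial>M)"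
        unfolding pI_def
      proof (intro nn_integral_mono_AE)
        show "AE w in M. ennreal (\<bar>l w * x w\<bar> powr p1) \<le> ennreal (t powr p1) * ennreal (\<bar>x w\<bar> powr p1)"
          using AE
        proof eventually_elim
          case (elim w)
          have "\<bar>l w * x w\<bar> powr p1 = \<bar>l w\<bar> powr p1 * \<bar>x w\<bar> powr p1" by (simp add: abs_mult powr_mult)
          also have "\<dots> \<le> t powr p1 * \<bar>x w\<bar> powr p1"
            using elim p1 by (intro mult_right_mono powr_mono2) auto
          finally show ?case by (simp add: ennreal_mult[symmetric] ennreal_leI)
        qed
      qed
      also have "\<dots> = ennreal (t powr p1) * pI M p1 x"
        using x by (simp add: pI_def nn_integral_cmult)
      finally have "lpnorm M p1 (\<lambda>w. l w * x w) \<le> ennreal t * lpnorm M p1 x"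
        using p1 t by (intro lp_scale) auto
      thus ?thesis using True L by (simp add: t_def)
    qed
  qed
  thus ?thesis using Dpos by blast
next
  case False
  hence p12': "p1 < p2" using p12 by simp
  define s where "s = 1 / (1/p1 - 1/p2)"
  have sd: "1/p1 - 1/p2 > 0" using p1 p12' by (simp add: frac_less2)
  have spos: "s > 0" using sd by (simp add: s_def)
  have invs: "1/s = 1/p1 - 1/p2" by (simp add: s_def)
  have "1/s \<le> 1/r" using cond invs by simp
  hence "(1/s) * (r * s) \<le> (1/r) * (r * s)" using spos r by (intro mult_right_mono) auto
  hence rs: "r \<le> s" using spos r by simp
  obtain Cs :: real where Cs: "\<forall>h \<in> borel_measurable M. lpnorm M s h \<le> ennreal Cs * lpnorm M r h"
  proof (cases "r = s")
    case True
    thus ?thesis using that[of 1] by simp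
  next
    case False
    thus ?thesis using that rev[of r s] r rs by auto
  qed
  define D where "D = max Cs 1"
  have Dpos: "D > 0" by (simp add: D_def)
  have "lpnorm M p1 (\<lambda>w. l w * x w) \<le> ennreal (D * enn2real (pI M r l) powr (1/r)) * lpnorm M p2 x"
    if l: "l \<in> borel_measurable M" and x: "x \<in> borel_measurable M" and fin: "pI M r l < \<infinity>" for l x
  proof -
    define L where "L = enn2real (pI M r l)"
    have L: "pI M r l = ennreal L" "0 \<le> L" using fin by (auto simp: L_def less_top)
    show ?thesis
    proof (cases "L = 0")
      case True
      hence "lpnorm M p1 (\<lambda>w. l w * x w) = 0" using L l r p1 by (intro pI_zero_mult) auto
      thus ?thesis by simp
    next
      case False
      hence Lpos: "L > 0" using L by simp
      have DL: "D * L powr (1/r) > 0" using Dpos Lpos by simp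
      show ?thesis
      proof (cases "pI M p2 x = \<infinity>")
        case True
        have "lpnorm M p2 x = top" using True by (simp add: lpnorm_pI)
        moreover have "ennreal (D * enn2real (pI M r l) powr (1/r)) \<noteq> 0" using Dpos Lpos by (simp add: L_def)
        ultimately show ?thesis by (simp add: ennreal_mult_top)
      next
        case False
        define X where "X = enn2real (pI M p2 x)"
        have X: "pI M p2 x = ennreal X" "0 \<le> X" using False by (auto simp: X_def less_top)
        have lr: "lpnorm M r l = ennreal (L powr (1/r))" using L by (simp add: lpnorm_fin)
        have ls: "lpnorm M s l \<le> ennreal (D * L powr (1/r))"
        proof -
          have "lpnorm M s l \<le> ennreal Cs * ennreal (L powr (1/r))" using Cs l lr by auto
          also have "\<dots> \<le> ennreal D * ennreal (L powr (1/r))"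
            by (intro mult_right_mono ennreal_leI) (auto simp: D_def)
          also have "\<dots> = ennreal (D * L powr (1/r))" using Dpos by (simp add: ennreal_mult)
          finally show ?thesis .
        qed
        have sfin: "pI M s l \<noteq> \<infinity>"
        proof
          assume "pI M s l = \<infinity>"
          hence "lpnorm M s l = top" by (simp add: lpnorm_pI)
          thus False using ls by (metis ennreal_neq_top top_unique)
        qed
        define S' where "S' = enn2real (pI M s l)"
        have S': "pI M s l = ennreal S'" "0 \<le> S'" using sfin by (auto simp: S'_def less_top)
        have "S' powr (1/s) \<le> D * L powr (1/r)"
          using ls sfin DL by (simp add: lpnorm_fin S'_def[symmetric] ennreal_le_iff2)
        have ab: "p1/s + p1/p2 = 1" using invs p1 by (simp add: field_simps)
        have "pI M p1 (\<lambda>w. l w * x w) =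
            (\<integral>\<^sup>+ w. ennreal ((\<bar>l w\<bar> powr s) powr (p1/s) * (\<bar>x w\<bar> powr p2) powr (p1/p2)) \<partial>M)"
          unfolding pI_def using spos p1 p12
          by (intro nn_integral_cong) (simp add: powr_powr abs_mult powr_mult)
        also have "\<dots> \<le> ennreal (S' powr (p1/s) * X powr (p1/p2))"
          using S' X l x spos p1 p12 ab
          by (intro holder_nn) (auto simp: pI_def)
        also have "S' powr (p1/s) * X powr (p1/p2) = (S' powr (1/s) * X powr (1/p2)) powr p1"
          using S' X by (simp add: powr_mult powr_powr)
        finally have "lpnorm M p1 (\<lambda>w. l w * x w) \<le> ennreal (S' powr (1/s) * X powr (1/p2))"
          using p1 by (intro lp_le) auto
        also have "\<dots> \<le> ennreal (D * L powr (1/r) * X powr (1/p2))"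
          using \<open>S' powr (1/s) \<le> D * L powr (1/r)\<close> by (intro ennreal_leI mult_right_mono) auto
        also have "\<dots> = ennreal (D * L powr (1/r)) * lpnorm M p2 x"
          using X DL by (simp add: lpnorm_fin ennreal_mult)
        finally show ?thesis by (simp add: L_def)
      qed
    qed
  qed
  thus ?thesis using Dpos by blast
qed



lemma powr_times_self: "0 \<le> (x::real) \<Longrightarrow> x powr a * x = x powr (a + 1)"
  by (cases "x = 0") (auto simp: powr_add)

lemma trunc_claim:
  fixes a G g :: "'w \<Rightarrow> real" and b :: "'k \<Rightarrow> 'w \<Rightarrow> real"
  assumes am: "a \<in> borel_measurable M" and bm: "\<And>k. k \<in> K \<Longrightarrow> b k \<in> borel_measurable M"
    and Gm: "G \<in> borel_measurable M"
    and C: "C > 0" and D: "D > 0"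
    and q: "1 \<le> q1" "q1 < q2" and rdef: "r = 1 / (1/q1 - 1/q2)" and p: "1 \<le> p1" "p1 \<le> p2"
    and hyp: "\<forall>g. g \<in> borel_measurable M \<and> lpnorm M q1 g < \<infinity> \<longrightarrow>
        lpnorm M q1 (\<lambda>w. g w * a w) \<le> ennreal C * (SUP k\<in>K. lpnorm M p1 (\<lambda>w. g w * b k w))"
    and Wd: "\<forall>l x. l \<in> borel_measurable M \<longrightarrow> x \<in> borel_measurable M \<longrightarrow> pI M r l < \<infinity> \<longrightarrow>
     lpnorm M p1 (\<lambda>w. l w * x w) \<le> ennreal (D * enn2real (pI M r l) powr (1/r)) * lpnorm M p2 x"
    and t: "0 \<le> t" and tb: "\<And>k. k \<in> K \<Longrightarrow> lpnorm M p2 (\<lambda>w. G w * b k w) \<le> ennreal t"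
    and Ga: "\<And>w. \<bar>G w * a w\<bar> \<le> n * \<bar>G w\<bar>" and n: "0 \<le> n"
    and Gfin: "pI M q2 G < \<infinity>"
  shows "pI M q2 (\<lambda>w. G w * a w) \<le> ennreal ((C * D * t) powr q2)"
proof -
  have q1pos: "q1 > 0" "q2 > 0" using q by auto
  have rd: "1/q1 - 1/q2 > 0" using q by (simp add: frac_less2)
  define e0 where "e0 = q2 / q1 - 1"
  have e0: "e0 \<ge> 0" using q by (simp add: e0_def)
  have e0r: "e0 * r = q2" using q1pos rd unfolding e0_def rdef by (simp add: field_simps)
  have e0q: "(e0 + 1) * q1 = q2" using q1pos unfolding e0_def by (simp add: field_simps)
  have rpos: "r > 0" using rd rdef by simp
  have rinv: "1/q1 = 1/r + 1/q2" using rdef by simp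
  have "pI M q2 (\<lambda>w. G w * a w) \<le> (\<integral>\<^sup>+ w. ennreal (n powr q2) * ennreal (\<bar>G w\<bar> powr q2) \<partial>M)"
    unfolding pI_def
  proof (intro nn_integral_mono)
    fix w
    have "\<bar>G w * a w\<bar> powr q2 \<le> (n * \<bar>G w\<bar>) powr q2" using Ga q1pos by (intro powr_mono2) auto
    also have "\<dots> = n powr q2 * \<bar>G w\<bar> powr q2" using n by (simp add: powr_mult)
    finally show "ennreal (\<bar>G w * a w\<bar> powr q2) \<le> ennreal (n powr q2) * ennreal (\<bar>G w\<bar> powr q2)"
      by (simp add: ennreal_mult[symmetric] ennreal_leI)
  qed
  also have "\<dots> = ennreal (n powr q2) * pI M q2 G" using Gm by (simp add: pI_def nn_integral_cmult)
  also have "\<dots> < \<infinity>" using Gfin by (simp add: ennreal_mult_less_top)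
  finally have Afin: "pI M q2 (\<lambda>w. G w * a w) < \<infinity>" .
  define A where "A = enn2real (pI M q2 (\<lambda>w. G w * a w))"
  have A: "pI M q2 (\<lambda>w. G w * a w) = ennreal A" "0 \<le> A" using Afin by (auto simp: A_def less_top)
  show ?thesis
  proof (cases "A = 0")
    case True thus ?thesis using A by simp
  next
    case False
    hence Apos: "A > 0" using A by simp
    define l where "l w = \<bar>G w * a w\<bar> powr e0" for w
    define g' where "g' w = l w * G w" for w
    have lm: "l \<in> borel_measurable M" unfolding l_def using Gm am by measurable
    have g'm: "g' \<in> borel_measurable M" unfolding g'_def using lm Gm by measurable
    have plr: "pI M r l = ennreal A"
      unfolding A(1)[symmetric] pI_def l_def using e0r by (simp add: powr_powr)
    have g'fin: "pI M q1 g' < \<infinity>"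
    proof -
      have "pI M q1 g' \<le> (\<integral>\<^sup>+ w. ennreal (n powr (e0*q1)) * ennreal (\<bar>G w\<bar> powr q2) \<partial>M)"
        unfolding pI_def
      proof (intro nn_integral_mono)
        fix w
        have "\<bar>g' w\<bar> powr q1 = \<bar>G w * a w\<bar> powr (e0*q1) * \<bar>G w\<bar> powr q1"
          by (simp add: g'_def l_def abs_mult powr_mult powr_powr)
        also have "\<dots> \<le> (n * \<bar>G w\<bar>) powr (e0*q1) * \<bar>G w\<bar> powr q1"
          using Ga e0 q1pos by (intro mult_right_mono powr_mono2) auto
        also have "\<dots> = n powr (e0*q1) * \<bar>G w\<bar> powr (e0 * q1 + q1)"
          using n by (simp add: powr_mult powr_add)
        also have "e0 * q1 + q1 = q2" using e0q by (simp add: algebra_simps)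
        finally show "ennreal (\<bar>g' w\<bar> powr q1) \<le> ennreal (n powr (e0*q1)) * ennreal (\<bar>G w\<bar> powr q2)"
          by (simp add: ennreal_mult[symmetric] ennreal_leI)
      qed
      also have "\<dots> = ennreal (n powr (e0*q1)) * pI M q2 G" using Gm by (simp add: pI_def nn_integral_cmult)
      also have "\<dots> < \<infinity>" using Gfin by (simp add: ennreal_mult_less_top)
      finally show ?thesis .
    qed
    have H: "lpnorm M q1 (\<lambda>w. g' w * a w) \<le> ennreal C * (SUP k\<in>K. lpnorm M p1 (\<lambda>w. g' w * b k w))"
    proof -
      have "lpnorm M q1 g' < \<infinity>" using g'fin lpnorm_fin_iff by (metis infinity_ennreal_def)
      thus ?thesis using hyp g'm by blast
    qed
    have "pI M q1 (\<lambda>w. g' w * a w) = ennreal A"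
    proof -
      have "\<And>w. \<bar>g' w * a w\<bar> powr q1 = \<bar>G w * a w\<bar> powr q2"
      proof -
        fix w
        have "\<bar>g' w * a w\<bar> = \<bar>G w * a w\<bar> powr e0 * \<bar>G w * a w\<bar>"
          by (simp add: g'_def l_def abs_mult)
        also have "\<dots> = \<bar>G w * a w\<bar> powr (e0 + 1)" by (simp add: powr_times_self)
        finally show "\<bar>g' w * a w\<bar> powr q1 = \<bar>G w * a w\<bar> powr q2"
          using e0q by (simp add: powr_powr)
      qed
      thus ?thesis unfolding A(1)[symmetric] pI_def by simp
    qed
    hence LHS: "lpnorm M q1 (\<lambda>w. g' w * a w) = ennreal (A powr (1/q1))" using A(2) by (simp add: lpnorm_fin)
    have "lpnorm M p1 (\<lambda>w. g' w * b k w) \<le> ennreal (D * A powr (1/r)) * ennreal t" if k: "k \<in> K" for k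
    proof -
      have "lpnorm M p1 (\<lambda>w. g' w * b k w) = lpnorm M p1 (\<lambda>w. l w * (G w * b k w))"
        by (simp add: g'_def mult.assoc)
      also have "\<dots> \<le> ennreal (D * enn2real (pI M r l) powr (1/r)) * lpnorm M p2 (\<lambda>w. G w * b k w)"
      proof -
        have xm: "(\<lambda>w. G w * b k w) \<in> borel_measurable M" using Gm bm[OF k] by measurable
        have "pI M r l < \<infinity>" using plr by simp
        thus ?thesis using Wd lm xm by blast
      qed
      also have "\<dots> \<le> ennreal (D * A powr (1/r)) * ennreal t"
        using plr A tb[OF k] by (simp add: mult_left_mono)
      finally show ?thesis .
    qed
    hence "(SUP k\<in>K. lpnorm M p1 (\<lambda>w. g' w * b k w)) \<le> ennreal (D * A powr (1/r)) * ennreal t"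
      by (intro SUP_least) auto
    hence "ennreal C * (SUP k\<in>K. lpnorm M p1 (\<lambda>w. g' w * b k w)) \<le> ennreal C * (ennreal (D * A powr (1/r)) * ennreal t)"
      by (rule mult_left_mono) auto
    hence "ennreal (A powr (1/q1)) \<le> ennreal C * (ennreal (D * A powr (1/r)) * ennreal t)"
      using H LHS by simp
    also have "\<dots> = ennreal (C * D * A powr (1/r) * t)"
      using C D t by (simp add: ennreal_mult[symmetric] mult.assoc)
    finally have "A powr (1/q1) \<le> C * D * A powr (1/r) * t"
      using C D t by (subst (asm) ennreal_le_iff) auto
    moreover have "A powr (1/q1) = A powr (1/r) * A powr (1/q2)"
      unfolding rinv by (rule powr_add)
    ultimately have "A powr (1/r) * A powr (1/q2) \<le> A powr (1/r) * (C * D * t)"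
      by (simp add: mult.assoc mult.left_commute)
    hence "A powr (1/q2) \<le> C * D * t" using Apos by simp
    hence "(A powr (1/q2)) powr q2 \<le> (C * D * t) powr q2"
      using q1pos by (intro powr_mono2) auto
    hence "A \<le> (C * D * t) powr q2" using q1pos A by (simp add: powr_powr)
    thus ?thesis using A by (simp add: ennreal_leI)
  qed
qed



lemma core:
  fixes a g :: "'w \<Rightarrow> real" and b :: "'k \<Rightarrow> 'w \<Rightarrow> real"
  assumes am: "a \<in> borel_measurable M" and bm: "\<And>k. k \<in> K \<Longrightarrow> b k \<in> borel_measurable M"
    and gm: "g \<in> borel_measurable M"
    and C: "C > 0" and D: "D > 0"
    and q: "1 \<le> q1" "q1 < q2" and rdef: "r = 1 / (1/q1 - 1/q2)" and p: "1 \<le> p1" "p1 \<le> p2"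
    and hyp: "\<forall>g. g \<in> borel_measurable M \<and> lpnorm M q1 g < \<infinity> \<longrightarrow>
        lpnorm M q1 (\<lambda>w. g w * a w) \<le> ennreal C * (SUP k\<in>K. lpnorm M p1 (\<lambda>w. g w * b k w))"
    and Wd: "\<forall>l x. l \<in> borel_measurable M \<longrightarrow> x \<in> borel_measurable M \<longrightarrow> pI M r l < \<infinity> \<longrightarrow>
     lpnorm M p1 (\<lambda>w. l w * x w) \<le> ennreal (D * enn2real (pI M r l) powr (1/r)) * lpnorm M p2 x"
    and gfin: "lpnorm M q2 g < \<infinity>"
  shows "lpnorm M q2 (\<lambda>w. g w * a w) \<le> ennreal (C * D) * (SUP k\<in>K. lpnorm M p2 (\<lambda>w. g w * b k w))"
proof (cases "(SUP k\<in>K. lpnorm M p2 (\<lambda>w. g w * b k w)) = \<infinity>")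
  case True
  have "ennreal (C * D) \<noteq> 0" using C D by simp
  thus ?thesis using True by (metis ennreal_mult_top top_greatest infinity_ennreal_def)
next
  case False
  define T where "T = (SUP k\<in>K. lpnorm M p2 (\<lambda>w. g w * b k w))"
  define t where "t = enn2real T"
  have Tt: "T \<noteq> top" using False unfolding T_def by (metis infinity_ennreal_def)
  have T: "T = ennreal t" "0 \<le> t" using Tt by (auto simp: t_def less_top[symmetric] ennreal_enn2real)
  have q2: "q2 > 0" using q by simp
  have gfin': "pI M q2 g < \<infinity>" using gfin lpnorm_fin_iff by (metis infinity_ennreal_def)
  define G where "G n w = (if \<bar>a w\<bar> \<le> real n then g w else 0)" for n w
  have Gm: "G n \<in> borel_measurable M" for n unfolding G_def using am gm by measurable
  have Gle: "\<bar>G n w\<bar> \<le> \<bar>g w\<bar>" for n w by (simp add: G_def)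
  have claim: "pI M q2 (\<lambda>w. G n w * a w) \<le> ennreal ((C * D * t) powr q2)" for n
  proof (rule trunc_claim[OF am bm Gm C D q rdef p hyp Wd T(2)])
    fix k assume k: "k \<in> K"
    have "lpnorm M p2 (\<lambda>w. G n w * b k w) \<le> lpnorm M p2 (\<lambda>w. g w * b k w)"
      using p by (intro lpnorm_mono) (auto simp: G_def abs_mult)
    also have "\<dots> \<le> T" unfolding T_def using k by (rule SUP_upper)
    finally show "lpnorm M p2 (\<lambda>w. G n w * b k w) \<le> ennreal t" using T by simp
  next
    fix w show "\<bar>G n w * a w\<bar> \<le> real n * \<bar>G n w\<bar>"
      by (simp add: G_def abs_mult mult.commute mult_right_mono)
  next
    show "0 \<le> real n" by simp
  next
    have "pI M q2 (G n) \<le> pI M q2 g" using q2 by (intro pI_mono Gle) auto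
    thus "pI M q2 (G n) < \<infinity>" using gfin' by (rule le_less_trans)
  qed
  define f where "f n w = ennreal (\<bar>G n w * a w\<bar> powr q2)" for n w
  have inc: "incseq f"
    unfolding incseq_def le_fun_def f_def G_def using q2
    by (auto intro!: ennreal_leI powr_mono2)
  have fm: "f n \<in> borel_measurable M" for n unfolding f_def using Gm am by measurable
  have pt: "(SUP n. f n w) = ennreal (\<bar>g w * a w\<bar> powr q2)" for w
  proof (rule antisym)
    show "(SUP n. f n w) \<le> ennreal (\<bar>g w * a w\<bar> powr q2)"
      unfolding f_def G_def using q2 by (auto intro!: SUP_least ennreal_leI powr_mono2)
    have "f (nat \<lceil>\<bar>a w\<bar>\<rceil>) w = ennreal (\<bar>g w * a w\<bar> powr q2)"
      unfolding f_def G_def by (simp add: real_nat_ceiling_ge)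
    thus "ennreal (\<bar>g w * a w\<bar> powr q2) \<le> (SUP n. f n w)"
      by (metis UNIV_I SUP_upper)
  qed
  have "pI M q2 (\<lambda>w. g w * a w) = (\<integral>\<^sup>+ w. (SUP n. f n w) \<partial>M)"
    unfolding pI_def pt ..
  also have "\<dots> = (SUP n. integral\<^sup>N M (f n))"
    by (rule nn_integral_monotone_convergence_SUP[OF inc fm])
  also have "\<dots> \<le> ennreal ((C * D * t) powr q2)"
    using claim by (intro SUP_least) (simp add: pI_def f_def[abs_def])
  finally have "lpnorm M q2 (\<lambda>w. g w * a w) \<le> ennreal (C * D * t)"
    using q2 C D T by (intro lp_le) auto
  also have "\<dots> = ennreal (C * D) * T" using T C D by (simp add: ennreal_mult)
  finally show ?thesis by (simp add: T_def)
qed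



theorem theorem3p2:
  fixes M :: "'w measure"
    and F :: "(('x::real_vector) \<Rightarrow> 'y) set"
    and H :: "('w \<Rightarrow> 'x) set"
    and K :: "('k::topological_space) set"
    and S :: "('x \<Rightarrow> 'y) \<Rightarrow> ('w \<Rightarrow> 'x) \<Rightarrow> 'w \<Rightarrow> real"
    and R :: "('w \<Rightarrow> 'x) \<Rightarrow> 'k \<Rightarrow> 'w \<Rightarrow> real"
    and p1 p2 q1 q2 :: real
  assumes "compact K"
    and H_scal: "\<And>\<alpha> f. f \<in> H \<Longrightarrow> (\<lambda>v. \<alpha> *\<^sub>R f v) \<in> H"
    and S_meas: "\<And>u f. u \<in> F \<Longrightarrow> f \<in> H \<Longrightarrow> S u f \<in> borel_measurable M"
    and R_meas: "\<And>f k. f \<in> H \<Longrightarrow> k \<in> K \<Longrightarrow> R f k \<in> borel_measurable M"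
    and S_hom: "\<And>\<alpha> u f w. u \<in> F \<Longrightarrow> f \<in> H \<Longrightarrow> \<bar>\<alpha> * S u f w\<bar> = \<bar>S u ((\<lambda>v. \<alpha> *\<^sub>R f v)) w\<bar>"
    and R_hom: "\<And>\<alpha> f k w. f \<in> H \<Longrightarrow> k \<in> K \<Longrightarrow> \<bar>\<alpha> * R f k w\<bar> = \<bar>R ((\<lambda>v. \<alpha> *\<^sub>R f v)) k w\<bar>"
    and rev: "\<And>r s. 1 \<le> r \<Longrightarrow> r < s \<Longrightarrow>
       \<exists>C::real. \<forall>h \<in> borel_measurable M. lpnorm M s h \<le> ennreal C * lpnorm M r h"
    and "1 \<le> p1" "p1 \<le> p2"
    and "1 \<le> q1" "q1 \<le> q2"
    and "1 / p1 - 1 / p2 \<le> 1 / q1 - 1 / q2"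
  shows "RS M F H K S R q1 p1 \<subseteq> RS M F H K S R q2 p2"
proof
  fix u assume uin: "u \<in> RS M F H K S R q1 p1"
  have uin': "u \<in> F \<and> (\<exists>C>0. \<forall>f\<in>H. \<forall>g. g \<in> borel_measurable M \<and> lpnorm M q1 g < \<infinity> \<longrightarrow>
        lpnorm M q1 (\<lambda>w. S u (\<lambda>v. g w *\<^sub>R f v) w)
          \<le> ennreal C * (SUP k\<in>K. lpnorm M p1 (\<lambda>w. R (\<lambda>v. g w *\<^sub>R f v) k w)))"
    using uin unfolding RS_def by (rule CollectD)
  have uF: "u \<in> F" using uin' by (rule conjunct1)
  obtain C where CC: "C > 0 \<and> (\<forall>f\<in>H. \<forall>g. g \<in> borel_measurable M \<and> lpnorm M q1 g < \<infinity> \<longrightarrow>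
        lpnorm M q1 (\<lambda>w. S u (\<lambda>v. g w *\<^sub>R f v) w)
          \<le> ennreal C * (SUP k\<in>K. lpnorm M p1 (\<lambda>w. R (\<lambda>v. g w *\<^sub>R f v) k w)))"
    using conjunct2[OF uin'] ..
  have C: "C > 0" using CC by (rule conjunct1)
  have hyp0: "\<forall>f\<in>H. \<forall>g. g \<in> borel_measurable M \<and> lpnorm M q1 g < \<infinity> \<longrightarrow>
        lpnorm M q1 (\<lambda>w. S u (\<lambda>v. g w *\<^sub>R f v) w)
          \<le> ennreal C * (SUP k\<in>K. lpnorm M p1 (\<lambda>w. R (\<lambda>v. g w *\<^sub>R f v) k w))"
    using CC by (rule conjunct2)
  show "u \<in> RS M F H K S R q2 p2"
  proof (cases "q1 = q2")
    case True
    have "1/p1 - 1/p2 \<le> 0" using True assms(12) by simp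
    moreover have "1/p2 \<le> 1/p1" using assms(8,9) by (intro divide_left_mono) auto
    ultimately have "1/p1 = 1/p2" by simp
    hence "p1 = p2" by simp
    thus ?thesis using True uin by simp
  next
    case False
    hence q12: "q1 < q2" using assms(11) by simp
    define r where "r = 1 / (1/q1 - 1/q2)"
    have rd: "1/q1 - 1/q2 > 0" using q12 assms(10) by (simp add: frac_less2)
    have "1/q1 \<le> 1" using assms(10) by simp
    moreover have "0 < 1/q2" using assms(10) q12 by simp
    ultimately have "1/q1 - 1/q2 \<le> 1" by linarith
    hence r1: "1 \<le> r" using rd by (simp add: r_def le_divide_eq)
    have cond: "1/p1 - 1/p2 \<le> 1/r" using assms(12) by (simp add: r_def)
    obtain D where D: "D > 0" and Wd: "\<forall>l x. l \<in> borel_measurable M \<longrightarrow> x \<in> borel_measurable M \<longrightarrow> pI M r l < \<infinity> \<longrightarrow>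
     lpnorm M p1 (\<lambda>w. l w * x w) \<le> ennreal (D * enn2real (pI M r l) powr (1/r)) * lpnorm M p2 x"
      using W[OF rev assms(8,9) r1 cond] by blast
    have "\<forall>f\<in>H. \<forall>g. g \<in> borel_measurable M \<and> lpnorm M q2 g < \<infinity> \<longrightarrow>
        lpnorm M q2 (\<lambda>w. S u (\<lambda>v. g w *\<^sub>R f v) w)
          \<le> ennreal (C * D) * (SUP k\<in>K. lpnorm M p2 (\<lambda>w. R (\<lambda>v. g w *\<^sub>R f v) k w))"
    proof (intro ballI allI impI)
      fix f g assume f: "f \<in> H" and g: "g \<in> borel_measurable M \<and> lpnorm M q2 g < \<infinity>"
      have eqS: "lpnorm M q (\<lambda>w. S u (\<lambda>v. g w *\<^sub>R f v) w) = lpnorm M q (\<lambda>w. g w * S u f w)"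
        for q :: real and g :: "'w \<Rightarrow> real"
        by (rule lpnorm_cong) (use S_hom[OF uF f] in auto)
      have eqR: "(SUP k\<in>K. lpnorm M q (\<lambda>w. R (\<lambda>v. g w *\<^sub>R f v) k w)) = (SUP k\<in>K. lpnorm M q (\<lambda>w. g w * R f k w))"
        for q :: real and g :: "'w \<Rightarrow> real"
        by (intro SUP_cong refl lpnorm_cong) (use R_hom[OF f] in auto)
      have hyp: "\<forall>g. g \<in> borel_measurable M \<and> lpnorm M q1 g < \<infinity> \<longrightarrow>
        lpnorm M q1 (\<lambda>w. g w * S u f w) \<le> ennreal C * (SUP k\<in>K. lpnorm M p1 (\<lambda>w. g w * R f k w))"
      proof (intro allI impI)
        fix h assume h: "h \<in> borel_measurable M \<and> lpnorm M q1 h < \<infinity>"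
        have "lpnorm M q1 (\<lambda>w. S u (\<lambda>v. h w *\<^sub>R f v) w)
          \<le> ennreal C * (SUP k\<in>K. lpnorm M p1 (\<lambda>w. R (\<lambda>v. h w *\<^sub>R f v) k w))"
          using hyp0 f h by blast
        thus "lpnorm M q1 (\<lambda>w. h w * S u f w) \<le> ennreal C * (SUP k\<in>K. lpnorm M p1 (\<lambda>w. h w * R f k w))"
          by (simp only: eqS eqR)
      qed
      have "lpnorm M q2 (\<lambda>w. g w * S u f w) \<le> ennreal (C * D) * (SUP k\<in>K. lpnorm M p2 (\<lambda>w. g w * R f k w))"
        using core[OF S_meas[OF uF f] R_meas[OF f] _ C D assms(10) q12 r_def assms(8,9) hyp Wd] g by blast
      thus "lpnorm M q2 (\<lambda>w. S u (\<lambda>v. g w *\<^sub>R f v) w)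
          \<le> ennreal (C * D) * (SUP k\<in>K. lpnorm M p2 (\<lambda>w. R (\<lambda>v. g w *\<^sub>R f v) k w))"
        by (simp add: eqS eqR)
    qed
    thus ?thesis unfolding RS_def using uF C D by (auto intro!: exI[of _ "C * D"])
  qed
qed

end
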